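(* Let $1\le k\le m$, let $l=(l_1,\dots,l_k)$ be integers with $0<l_1<\dots<l_k<m+1$, and let $\nu$ be a permutation of $[k]$. Let $f:[m]\to\mathbb{R}$ be such that the average $\frac{1}{m-l_i+1}\sum_{v=l_i}^{m}f(v)$ is the same for all $i\in[k]$, and define $g:S'_{k,m}\to\mathbb{R}$ by $g(x)=\sum_{i=1}^{k}f(x_i)$. Then $g$ is homomesic for $\underline{W}_\nu$ acting on $S'_{k,m}$.
   Context: $S_{k,m}$: integer $k$-tuples with $0<x_1<\dots<x_k<m+1$. Winching $W_i(x)=y$: $y_j=x_j$ ($j\ne i$), $y_i=x_i+1$ if $x_i+1<x_{i+1}$, else $y_i=x_{i-1}+1$, with $x_0=0$, $x_{k+1}=m+1$. Given lower bounds $l$, $S'_{k,m}=\{x\in S_{k,m}: x_i\ge l_i\ \forall i\}$; winching with lower bounds $\underline{W}_i$ agrees with $W_i$ except that its $i$-th coordinate is $\max\{(W_i(x))_i,\,l_i\}$ (it is a permutation of $S'_{k,m}$). $\underline{W}_\nu=\underline{W}_{\nu(k)}\circ\cdots\circ\underline{W}_{\nu(1)}$. A function on a finite set with a permutation $\tau$ is homomesic if its average over every $\tau$-orbit is the same constant. *)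

theory Defs
  imports Complex_Main "HOL-Combinatorics.Permutations"
begin

text \<open>Tuples x = (x_1,...,x_k) are represented as functions nat => int, with
  the coordinates at indices 1..k and value 0 at all other indices.\<close>

definition bnd :: "nat \<Rightarrow> int \<Rightarrow> (nat \<Rightarrow> int) \<Rightarrow> nat \<Rightarrow> int" where
  "bnd k m x i = (if i = 0 then 0 else if i = k + 1 then m + 1 else x i)"

definition S_set :: "nat \<Rightarrow> int \<Rightarrow> (nat \<Rightarrow> int) set" where
  "S_set k m = {x. (\<forall>i. (i < 1 \<or> k < i) \<longrightarrow> x i = 0) \<and>
                   (\<forall>i\<le>k. bnd k m x i < bnd k m x (i + 1))}"

definition S'_set :: "nat \<Rightarrow> int \<Rightarrow> (nat \<Rightarrow> int) \<Rightarrow> (nat \<Rightarrow> int) set" where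
  "S'_set k m l = {x \<in> S_set k m. \<forall>i\<in>{1..k}. l i \<le> x i}"

definition winch :: "nat \<Rightarrow> int \<Rightarrow> nat \<Rightarrow> (nat \<Rightarrow> int) \<Rightarrow> (nat \<Rightarrow> int)" where
  "winch k m i x = x(i := (if x i + 1 < bnd k m x (i + 1) then x i + 1
                           else bnd k m x (i - 1) + 1))"

definition lwinch :: "nat \<Rightarrow> int \<Rightarrow> (nat \<Rightarrow> int) \<Rightarrow> nat \<Rightarrow> (nat \<Rightarrow> int) \<Rightarrow> (nat \<Rightarrow> int)" where
  "lwinch k m l i x = (winch k m i x)(i := max (winch k m i x i) (l i))"

text \<open>W_nu = W_{nu(k)} o ... o W_{nu(1)} (W_{nu(1)} is applied first).\<close>
definition lwinch_nu :: "nat \<Rightarrow> int \<Rightarrow> (nat \<Rightarrow> int) \<Rightarrow> (nat \<Rightarrow> nat) \<Rightarrow> (nat \<Rightarrow> int) \<Rightarrow> (nat \<Rightarrow> int)" where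
  "lwinch_nu k m l \<nu> x = fold (\<lambda>j y. lwinch k m l (\<nu> j) y) [1..<k+1] x"

definition orb :: "('a \<Rightarrow> 'a) \<Rightarrow> 'a \<Rightarrow> 'a set" where
  "orb \<tau> x = {(\<tau> ^^ n) x | n. True}"

definition homomesic :: "'a set \<Rightarrow> ('a \<Rightarrow> 'a) \<Rightarrow> ('a \<Rightarrow> real) \<Rightarrow> bool" where
  "homomesic X \<tau> h \<longleftrightarrow>
     (\<exists>c. \<forall>x\<in>X. (\<Sum>y\<in>orb \<tau> x. h y) / real (card (orb \<tau> x)) = c)"

end

theory Submission
  imports Defs
begin



lemma bnd_simps:
  "bnd k m x 0 = 0" "bnd k m x (k+1) = m + 1"
  "1 \<le> i \<Longrightarrow> i \<le> k \<Longrightarrow> bnd k m x i = x i"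
  by (auto simp: bnd_def)

lemma S'_iff: "x \<in> S'_set k m l \<longleftrightarrow>
   (\<forall>i. (i < 1 \<or> k < i) \<longrightarrow> x i = 0) \<and> (\<forall>i\<le>k. bnd k m x i < bnd k m x (i + 1)) \<and>
   (\<forall>i\<in>{1..k}. l i \<le> x i)"
  by (auto simp: S'_set_def S_set_def)

lemma lwinch_other: "j \<noteq> i \<Longrightarrow> lwinch k m l i x j = x j"
  by (simp add: lwinch_def winch_def)

lemma lwinch_same: "lwinch k m l i x i =
   max (if x i + 1 < bnd k m x (i + 1) then x i + 1 else bnd k m x (i - 1) + 1) (l i)"
  by (simp add: lwinch_def winch_def)

lemma S'_incr: "x \<in> S'_set k m l \<Longrightarrow> 1 \<le> i \<Longrightarrow> i < k \<Longrightarrow> x i < x (i+1)"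
proof -
  assume x: "x \<in> S'_set k m l" and i: "1 \<le> i" "i < k"
  then have "bnd k m x i < bnd k m x (i + 1)" unfolding S'_iff by auto
  then show ?thesis using i by (simp add: bnd_def)
qed

lemma S'_le: assumes x: "x \<in> S'_set k m l" and i: "1 \<le> i" and ij: "i \<le> j" and jk: "j \<le> k"
  shows "x i \<le> x j"
  using ij jk
proof (induction j rule: dec_induct)
  case base then show ?case by simp
next
  case (step j) then show ?case using S'_incr[OF x, of j] i by force
qed

lemma S'_top: "x \<in> S'_set k m l \<Longrightarrow> 1 \<le> k \<Longrightarrow> x k \<le> m"
proof -
  assume x: "x \<in> S'_set k m l" and k: "1 \<le> k"
  then have "bnd k m x k < bnd k m x (k + 1)" unfolding S'_iff by auto
  then show ?thesis using k by (simp add: bnd_def)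
qed

lemma S'_bounds: "x \<in> S'_set k m l \<Longrightarrow> 1 \<le> i \<Longrightarrow> i \<le> k \<Longrightarrow> x i \<le> m"
  using S'_le[of x k m l i k] S'_top[of x k m l] by simp

lemma S'_low: "x \<in> S'_set k m l \<Longrightarrow> 1 \<le> i \<Longrightarrow> i \<le> k \<Longrightarrow> l i \<le> x i"
  unfolding S'_iff by auto

lemma lwinch_in:
  assumes x: "x \<in> S'_set k m l" and i: "1 \<le> i" "i \<le> k"
  shows "lwinch k m l i x \<in> S'_set k m l"
proof -
  have A: "\<forall>i. (i < 1 \<or> k < i) \<longrightarrow> x i = 0" and B: "\<forall>j\<le>k. bnd k m x j < bnd k m x (j + 1)"
    and C: "\<forall>j\<in>{1..k}. l j \<le> x j" using x unfolding S'_iff by auto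
  define y where "y = lwinch k m l i x"
  have yo: "\<And>j. j \<noteq> i \<Longrightarrow> y j = x j" by (simp add: y_def lwinch_other)
  have bo: "\<And>j. j \<noteq> i \<Longrightarrow> bnd k m y j = bnd k m x j" using yo by (simp add: bnd_def)
  have bi: "bnd k m y i = y i" "bnd k m x i = x i" using i by (auto simp: bnd_def)
  have yi: "y i = max (if x i + 1 < bnd k m x (i + 1) then x i + 1 else bnd k m x (i - 1) + 1) (l i)"
    by (simp add: y_def lwinch_same)
  have B1: "bnd k m x (i - 1) < x i" using B[rule_format, of "i-1"] i bi by simp
  have B2: "x i < bnd k m x (i + 1)" using B[rule_format, of i] i bi by simp
  have li: "l i \<le> x i" using C i by auto
  have y1: "bnd k m x (i - 1) < y i" using yi B1 by auto
  have y2: "y i < bnd k m x (i + 1)" using yi B1 B2 li by auto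
  have "\<forall>j. (j < 1 \<or> k < j) \<longrightarrow> y j = 0" using A yo i by auto
  moreover have "\<forall>j\<le>k. bnd k m y j < bnd k m y (j + 1)"
  proof (intro allI impI)
    fix j assume j: "j \<le> k"
    consider "j = i" | "j + 1 = i" | "j \<noteq> i" "j + 1 \<noteq> i" by blast
    then show "bnd k m y j < bnd k m y (j + 1)"
    proof cases
      case 1 then show ?thesis using bo[of "i+1"] bi y2 by simp
    next
      case 2 then show ?thesis using bo[of "i-1"] bi y1 by auto
    next
      case 3 then show ?thesis using bo[of j] bo[of "j+1"] B j by simp
    qed
  qed
  moreover have "\<forall>j\<in>{1..k}. l j \<le> y j" using C yo yi by (metis max.cobounded2)
  ultimately show ?thesis unfolding S'_iff y_def by blast
qed

lemma lwinch_inj: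
  assumes x: "x \<in> S'_set k m l" and x': "x' \<in> S'_set k m l" and i: "1 \<le> i" "i \<le> k"
    and eq: "lwinch k m l i x = lwinch k m l i x'"
  shows "x = x'"
proof -
  have o: "\<And>j. j \<noteq> i \<Longrightarrow> x j = x' j" using eq lwinch_other by metis
  have b: "bnd k m x (i+1) = bnd k m x' (i+1)" "bnd k m x (i-1) = bnd k m x' (i-1)"
    using o i by (auto simp: bnd_def)
  have B: "\<forall>j\<le>k. bnd k m x j < bnd k m x (j + 1)" "\<forall>j\<le>k. bnd k m x' j < bnd k m x' (j + 1)"
    using x x' unfolding S'_iff by auto
  have bi: "bnd k m x i = x i" "bnd k m x' i = x' i" using i by (auto simp: bnd_def)
  have "bnd k m x (i - 1) < x i" "x i < bnd k m x (i + 1)"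
    "bnd k m x' (i - 1) < x' i" "x' i < bnd k m x' (i + 1)"
    using B(1)[rule_format, of "i-1"] B(1)[rule_format, of i]
      B(2)[rule_format, of "i-1"] B(2)[rule_format, of i] i bi by auto
  moreover have "l i \<le> x i" "l i \<le> x' i" using S'_low x x' i by auto
  moreover have "lwinch k m l i x i = lwinch k m l i x' i" using eq by simp
  ultimately have "x i = x' i" unfolding lwinch_same b
    by (auto simp: max_def split: if_splits)
  with o show ?thesis by (metis ext)
qed




definition stp :: "nat \<Rightarrow> int \<Rightarrow> (nat \<Rightarrow> int) \<Rightarrow> (nat \<Rightarrow> nat) \<Rightarrow> nat \<Rightarrow> (nat \<Rightarrow> int) \<Rightarrow> (nat \<Rightarrow> int)" where
  "stp k m l \<nu> j x = fold (\<lambda>j y. lwinch k m l (\<nu> j) y) [1..<j+1] x"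

lemma stp_0[simp]: "stp k m l \<nu> 0 x = x" by (simp add: stp_def)
lemma stp_Suc: "stp k m l \<nu> (Suc j) x = lwinch k m l (\<nu> (Suc j)) (stp k m l \<nu> j x)"
  by (simp add: stp_def)
lemma lwinch_nu_stp: "lwinch_nu k m l \<nu> x = stp k m l \<nu> k x"
  by (simp add: stp_def lwinch_nu_def)

context
  fixes k :: nat and m :: int and l :: "nat \<Rightarrow> int" and \<nu> :: "nat \<Rightarrow> nat"
  assumes perm: "\<nu> permutes {1..k}"
begin

lemma nu_in: "j \<in> {1..k} \<Longrightarrow> \<nu> j \<in> {1..k}" using permutes_in_image[OF perm] by blast
lemma sig_in: "j \<in> {1..k} \<Longrightarrow> inv \<nu> j \<in> {1..k}"
  using permutes_in_image[OF permutes_inv[OF perm]] by blast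
lemma nu_sig: "\<nu> (inv \<nu> i) = i" using permutes_inverses(1)[OF perm] by simp
lemma sig_nu: "inv \<nu> (\<nu> i) = i" using permutes_inverses(2)[OF perm] by simp

lemma stp_in: "x \<in> S'_set k m l \<Longrightarrow> j \<le> k \<Longrightarrow> stp k m l \<nu> j x \<in> S'_set k m l"
proof (induction j)
  case 0 then show ?case by simp
next
  case (Suc j) then show ?case using nu_in[of "Suc j"] lwinch_in by (simp add: stp_Suc)
qed

lemma stp_inj: "x \<in> S'_set k m l \<Longrightarrow> x' \<in> S'_set k m l \<Longrightarrow> j \<le> k \<Longrightarrow>
   stp k m l \<nu> j x = stp k m l \<nu> j x' \<Longrightarrow> x = x'"
proof (induction j)
  case 0 then show ?case by simp
next
  case (Suc j)
  then have "stp k m l \<nu> j x = stp k m l \<nu> j x'"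
    using nu_in[of "Suc j"] lwinch_inj[of "stp k m l \<nu> j x" k m l "stp k m l \<nu> j x'" "\<nu> (Suc j)"]
      stp_in by (simp add: stp_Suc)
  then show ?case using Suc by simp
qed

lemma stp_before: "inv \<nu> i \<notin> {1..j} \<Longrightarrow> stp k m l \<nu> j x i = x i"
proof (induction j)
  case 0 then show ?case by simp
next
  case (Suc j)
  have "\<nu> (Suc j) \<noteq> i" using Suc.prems sig_nu by force
  moreover have "inv \<nu> i \<notin> {1..j}" using Suc.prems by auto
  ultimately show ?case using Suc.IH by (simp add: stp_Suc lwinch_other)
qed

lemma stp_after: assumes "inv \<nu> i \<le> j" shows "stp k m l \<nu> j x i = stp k m l \<nu> (inv \<nu> i) x i"
  using assms
proof (induction j rule: dec_induct)
  case base then show ?case by simp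
next
  case (step j)
  have "\<nu> (Suc j) \<noteq> i" using step sig_nu by force
  then show ?case using step by (simp add: stp_Suc lwinch_other)
qed

lemma stp_coord: "j \<le> k \<Longrightarrow> stp k m l \<nu> j x i =
   (if inv \<nu> i \<in> {1..j} then lwinch_nu k m l \<nu> x i else x i)"
  using stp_before stp_after[of i j] stp_after[of i k] by (auto simp: lwinch_nu_stp)


definition "Qv y i = (if i = k then m+1 else if inv \<nu> (i+1) < inv \<nu> i then lwinch_nu k m l \<nu> y (i+1) else y (i+1))"
definition "Pv y i = (if i = 1 then 0 else if inv \<nu> (i-1) < inv \<nu> i then lwinch_nu k m l \<nu> y (i-1) else y (i-1))"

lemma sig_inj: "inv \<nu> i = inv \<nu> j \<Longrightarrow> i = j" using nu_sig by metis

lemma step: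
  assumes y: "y \<in> S'_set k m l" and i: "1 \<le> i" "i \<le> k"
  shows "lwinch_nu k m l \<nu> y i = max (if y i + 1 < Qv y i then y i + 1 else Pv y i + 1) (l i)"
proof -
  define j0 where "j0 = inv \<nu> i"
  have j0: "j0 \<in> {1..k}" using sig_in i j0_def by auto
  then obtain j1 where j1: "j0 = Suc j1" by (cases j0) auto
  have "lwinch_nu k m l \<nu> y i = stp k m l \<nu> j0 y i" using stp_coord[of j0 y i] j0 j0_def by auto
  moreover have "\<nu> (Suc j1) = i" using j1 nu_sig[of i] j0_def by metis
  then have "stp k m l \<nu> j0 y i = lwinch k m l i (stp k m l \<nu> j1 y) i" using j1 by (simp add: stp_Suc)
  ultimately have e: "lwinch_nu k m l \<nu> y i = lwinch k m l i (stp k m l \<nu> j1 y) i" by simp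
  have yi: "stp k m l \<nu> j1 y i = y i" proof (rule stp_before)
    show "inv \<nu> i \<notin> {1..j1}" using j1 unfolding j0_def by simp
  qed
  have q: "bnd k m (stp k m l \<nu> j1 y) (i + 1) = Qv y i"
  proof (cases "i = k")
    case True then show ?thesis by (simp add: bnd_def Qv_def Pv_def)
  next
    case False
    then have "inv \<nu> (i+1) \<in> {1..k}" by (intro sig_in) (use i False in auto)
    then show ?thesis using False stp_coord[of j1 y "i+1"] j0 j1 j0_def
      by (auto simp: bnd_def Qv_def)
  qed
  have p: "bnd k m (stp k m l \<nu> j1 y) (i - 1) = Pv y i"
  proof (cases "i = 1")
    case True then show ?thesis by (simp add: bnd_def Qv_def Pv_def)
  next
    case False
    then have "inv \<nu> (i-1) \<in> {1..k}" by (intro sig_in) (use i False in auto)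
    then show ?thesis using False stp_coord[of j1 y "i-1"] j0 j1 j0_def i
      by (auto simp: bnd_def Pv_def)
  qed
  show ?thesis using e yi q p by (simp add: lwinch_same)
qed

lemma Pv_lt:
  assumes y: "y \<in> S'_set k m l" and i: "1 \<le> i" "i < k"
  shows "Pv y (i+1) < y (i+1)" "Pv y (i+1) < lwinch_nu k m l \<nu> y (i+1)"
proof -
  have s1: "inv \<nu> (i+1) \<in> {1..k}" "inv \<nu> i \<in> {1..k}" using sig_in i by auto
  have ne: "inv \<nu> i \<noteq> inv \<nu> (i+1)" using sig_inj by force
  have pv: "Pv y (i+1) = (if inv \<nu> i < inv \<nu> (i+1) then lwinch_nu k m l \<nu> y i else y i)"
    using i by (simp add: Pv_def)
  define z where "z = stp k m l \<nu> (inv \<nu> (i+1) - 1) y"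
  have z: "z \<in> S'_set k m l" using stp_in y s1 z_def by auto
  have "z i = Pv y (i+1)" "z (i+1) = y (i+1)"
    using stp_coord[of "inv \<nu> (i+1) - 1" y i] stp_coord[of "inv \<nu> (i+1) - 1" y "i+1"] s1 pv
    unfolding z_def by auto
  then show "Pv y (i+1) < y (i+1)" using S'_incr[OF z] i by metis
  define z' where "z' = stp k m l \<nu> (inv \<nu> (i+1)) y"
  have z': "z' \<in> S'_set k m l" using stp_in y s1 z'_def by auto
  have "z' i = Pv y (i+1)" "z' (i+1) = lwinch_nu k m l \<nu> y (i+1)"
    using stp_coord[of "inv \<nu> (i+1)" y i] stp_coord[of "inv \<nu> (i+1)" y "i+1"] s1 pv ne
    unfolding z'_def by auto
  then show "Pv y (i+1) < lwinch_nu k m l \<nu> y (i+1)" using S'_incr[OF z'] i by metis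
qed

lemma tau_in: "y \<in> S'_set k m l \<Longrightarrow> lwinch_nu k m l \<nu> y \<in> S'_set k m l"
  using stp_in[of y k] by (simp add: lwinch_nu_stp)

lemma tau_inj: "inj_on (lwinch_nu k m l \<nu>) (S'_set k m l)"
  using stp_inj[of _ _ k] by (auto simp: lwinch_nu_stp intro: inj_onI)

end



lemma funpow_in: "(\<forall>y\<in>A. \<tau> y \<in> A) \<Longrightarrow> y \<in> A \<Longrightarrow> (\<tau> ^^ n) y \<in> A"
  by (induction n) auto

lemma funpow_inj: assumes "\<forall>y\<in>A. \<tau> y \<in> A" "inj_on \<tau> A" shows "inj_on (\<tau> ^^ n) A"
proof (induction n)
  case 0 then show ?case by simp
next
  case (Suc n)
  have "inj_on \<tau> ((\<tau> ^^ n) ` A)" using assms funpow_in[OF assms(1)]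
    by (meson image_subsetI inj_on_subset)
  then have "inj_on (\<tau> \<circ> (\<tau> ^^ n)) A" by (rule comp_inj_on[OF Suc.IH])
  then show ?case by (simp add: comp_def)
qed

lemma funpow_mult_fix: "(\<tau> ^^ L) x = x \<Longrightarrow> (\<tau> ^^ (L * q)) x = x"
proof (induction q)
  case 0 then show ?case by simp
next
  case (Suc q) then show ?case by (simp add: funpow_add)
qed

lemma orbit_cycle:
  assumes fin: "finite A" and cl: "\<forall>y\<in>A. \<tau> y \<in> A" and inj: "inj_on \<tau> A" and x: "x \<in> A"
  shows "\<exists>L>0. (\<tau> ^^ L) x = x \<and> inj_on (\<lambda>t. (\<tau> ^^ t) x) {..<L} \<and>
     orb \<tau> x = (\<lambda>t. (\<tau> ^^ t) x) ` {..<L}"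
proof -
  have "\<not> inj_on (\<lambda>t. (\<tau> ^^ t) x) {..card A}"
  proof
    assume "inj_on (\<lambda>t. (\<tau> ^^ t) x) {..card A}"
    moreover have "(\<lambda>t. (\<tau> ^^ t) x) ` {..card A} \<subseteq> A" using funpow_in[OF cl x] by auto
    ultimately have "card {..card A} \<le> card A" using card_inj_on_le fin by blast
    then show False by simp
  qed
  then obtain i j where ij: "i \<le> card A" "j \<le> card A" "i \<noteq> j" "(\<tau> ^^ i) x = (\<tau> ^^ j) x"
    unfolding inj_on_def by auto
  have "\<exists>i j. i < j \<and> (\<tau> ^^ i) x = (\<tau> ^^ j) x"
  proof (cases "i < j")
    case True then show ?thesis using ij by blast
  next
    case False then have "j < i" using ij by simp
    then show ?thesis using ij by metis
  qed
  then obtain i j where ij: "i < j" "(\<tau> ^^ i) x = (\<tau> ^^ j) x" by blast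
  have "(\<tau> ^^ (i + (j - i))) x = (\<tau> ^^ i) ((\<tau> ^^ (j - i)) x)"
    by (simp only: funpow_add comp_apply)
  moreover have "i + (j - i) = j" using ij by simp
  ultimately have "(\<tau> ^^ i) ((\<tau> ^^ (j - i)) x) = (\<tau> ^^ i) x"
    using ij by simp
  moreover have "(\<tau> ^^ (j - i)) x \<in> A" using funpow_in[OF cl x] .
  ultimately have "(\<tau> ^^ (j - i)) x = x" using funpow_inj[OF cl inj, of i] x
    by (meson inj_on_def)
  then have ex: "\<exists>n. 0 < n \<and> (\<tau> ^^ n) x = x" using ij by (intro exI[of _ "j - i"]) auto
  define L where "L = (LEAST n. 0 < n \<and> (\<tau> ^^ n) x = x)"
  have L: "0 < L" "(\<tau> ^^ L) x = x" using LeastI_ex[OF ex] unfolding L_def by auto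
  have Lmin: "\<And>n. 0 < n \<Longrightarrow> n < L \<Longrightarrow> (\<tau> ^^ n) x \<noteq> x"
    using not_less_Least unfolding L_def by blast
  have injL: "inj_on (\<lambda>t. (\<tau> ^^ t) x) {..<L}"
    using inj_on_funpow_least[OF L(2) Lmin] by (simp add: lessThan_atLeast0)
  have "orb \<tau> x = (\<lambda>t. (\<tau> ^^ t) x) ` {..<L}"
  proof
    show "orb \<tau> x \<subseteq> (\<lambda>t. (\<tau> ^^ t) x) ` {..<L}"
    proof
      fix y assume "y \<in> orb \<tau> x"
      then obtain n where y: "y = (\<tau> ^^ n) x" unfolding orb_def by auto
      have "(\<tau> ^^ (n mod L + L * (n div L))) x = (\<tau> ^^ (n mod L)) ((\<tau> ^^ (L * (n div L))) x)"
        by (simp only: funpow_add comp_apply)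
      moreover have "n mod L + L * (n div L) = n" by simp
      ultimately have "(\<tau> ^^ n) x = (\<tau> ^^ (n mod L)) ((\<tau> ^^ (L * (n div L))) x)"
        by simp
      also have "\<dots> = (\<tau> ^^ (n mod L)) x" using funpow_mult_fix[OF L(2)] by simp
      finally show "y \<in> (\<lambda>t. (\<tau> ^^ t) x) ` {..<L}" using y L by auto
    qed
    show "(\<lambda>t. (\<tau> ^^ t) x) ` {..<L} \<subseteq> orb \<tau> x" unfolding orb_def by auto
  qed
  then show ?thesis using L injL by blast
qed

lemma sum_shift_periodic: "g L = g 0 \<Longrightarrow> (\<Sum>t<L. g (Suc t)) = (\<Sum>t<L. (g t :: real))"
  using sum.lessThan_Suc_shift[of g L] sum.lessThan_Suc[of g L] by simp

lemma telesc:
  fixes a b :: "nat \<Rightarrow> real"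
  assumes k: "1 \<le> k" and a1: "a 1 = 0" and bk: "b k = 0" and ab: "\<And>i. 1 \<le> i \<Longrightarrow> i < k \<Longrightarrow> b i = a (Suc i)"
  shows "(\<Sum>i=1..k. a i) = (\<Sum>i=1..k. b i)"
proof -
  have e: "{1..k} = {1..<Suc k}" by auto
  have "(\<Sum>i=1..k. b i) = (\<Sum>i=1..<k. b i) + b k"
    unfolding e by (rule sum.atLeastLessThan_Suc) (rule k)
  also have "\<dots> = (\<Sum>i=1..<k. a (Suc i))" using bk ab by (auto intro!: sum.cong)
  also have "\<dots> = (\<Sum>i=Suc 1..<Suc k. a i)" by (rule sum.shift_bounds_Suc_ivl[symmetric])
  also have "\<dots> = (\<Sum>i=Suc 1..k. a i)" by (simp only: atLeastLessThanSuc_atLeastAtMost)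
  also have "\<dots> = (\<Sum>i=1..k. a i)" using sum.atLeast_Suc_atMost[OF k, of a] a1 by simp
  finally show ?thesis by simp
qed

lemma pairlem:
  fixes y a q Z lb :: int and F :: "int \<Rightarrow> real"
  assumes "Z = max (if a + 1 < q then a + 1 else y + 1) lb" "y < a" "y < Z" "F lb = 0"
  shows "(if y + 1 < Z then 0 else F (y + 1)) = (if a + 1 < q then 0 else F (max (y + 1) lb))"
  using assms by (auto simp: max_def)

lemma finite_S': "finite (S'_set k m l)"
proof -
  let ?h = "\<lambda>xs i. if 1 \<le> i \<and> i \<le> k then xs ! (i - 1) else (0::int)"
  have "S'_set k m l \<subseteq> ?h ` {xs. set xs \<subseteq> {0..m} \<and> length xs = k}"
  proof
    fix x assume x: "x \<in> S'_set k m l"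
    have z: "\<And>i. (i < 1 \<or> k < i) \<Longrightarrow> x i = 0" using x unfolding S'_iff by auto
    let ?xs = "map (\<lambda>j. x (j + 1)) [0..<k]"
    have "\<And>i. 1 \<le> i \<Longrightarrow> i \<le> k \<Longrightarrow> 0 \<le> x i \<and> x i \<le> m"
    proof -
      fix i assume i: "1 \<le> i" "i \<le> k"
      have "x 1 \<le> x i" using S'_le[OF x, of 1 i] i by simp
      moreover have "0 < x 1" using x i unfolding S'_iff by (auto simp: bnd_def dest!: spec[where x=0])
      ultimately show "0 \<le> x i \<and> x i \<le> m" using S'_bounds[OF x i] by simp
    qed
    then have "set ?xs \<subseteq> {0..m}" by auto
    moreover have "x = ?h ?xs" using z by (auto intro!: ext)
    ultimately show "x \<in> ?h ` {xs. set xs \<subseteq> {0..m} \<and> length xs = k}" by force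
  qed
  moreover have "finite {xs. set xs \<subseteq> {0..m} \<and> length xs = k}"
    by (rule finite_lists_length_eq) simp
  ultimately show ?thesis by (meson finite_imageI finite_subset)
qed




context
  fixes k :: nat and m :: int and l :: "nat \<Rightarrow> int" and \<nu> :: "nat \<Rightarrow> nat"
    and f :: "int \<Rightarrow> real" and c :: real
  assumes k1: "1 \<le> k" and km: "int k \<le> m"
    and l1: "0 < l 1" and linc: "\<And>i. 1 \<le> i \<Longrightarrow> i < k \<Longrightarrow> l i < l (i + 1)" and lk: "l k < m + 1"
    and perm: "\<nu> permutes {1..k}"
    and favg: "\<forall>i\<in>{1..k}. (\<Sum>v\<in>{l i..m}. f v) / real_of_int (m - l i + 1) = c"
begin

definition "FF v = (\<Sum>u\<in>{v..m}. f u - c)"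

lemma l_le: assumes i: "1 \<le> i" and ij: "i \<le> j" and jk: "j \<le> k" shows "l i \<le> l j"
  using ij jk
proof (induction j rule: dec_induct)
  case base then show ?case by simp
next
  case (step j) then show ?case using linc[of j] i by force
qed

lemma FF_l: assumes i: "i \<in> {1..k}" shows "FF (l i) = 0"
proof -
  have lm: "l i \<le> m" using l_le[of i k] i lk by auto
  then have pos: "0 < m - l i + 1" by simp
  have d: "(\<Sum>v\<in>{l i..m}. f v) / real_of_int (m - l i + 1) = c" using favg i by blast
  have nz: "real_of_int (m - l i + 1) \<noteq> 0" using pos by simp
  have s: "(\<Sum>v\<in>{l i..m}. f v) = c * real_of_int (m - l i + 1)"
    using d nz by (simp add: divide_eq_eq mult.commute)
  have "FF (l i) = (\<Sum>v\<in>{l i..m}. f v) - real (card {l i..m}) * c"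
    unfolding FF_def by (simp add: sum_subtractf)
  also have "real (card {l i..m}) = real_of_int (m - l i + 1)" using pos by simp
  finally show ?thesis using s by simp
qed

lemma FF_top: "FF (m + 1) = 0" by (simp add: FF_def)

lemma FF_step: assumes "v \<le> m" shows "f v - c = FF v - FF (v + 1)"
proof -
  have "{v..m} = insert v {v+1..m}" using assms by auto
  then show ?thesis unfolding FF_def by simp
qed

lemma main:
  assumes x: "x \<in> S'_set k m l"
  shows "(\<Sum>y\<in>orb (lwinch_nu k m l \<nu>) x. \<Sum>i=1..k. f (y i)) /
          real (card (orb (lwinch_nu k m l \<nu>) x)) = real k * c"
proof -
  let ?\<tau> = "lwinch_nu k m l \<nu>"
  have cl: "\<forall>y\<in>S'_set k m l. ?\<tau> y \<in> S'_set k m l" using tau_in[OF perm] by blast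
  from orbit_cycle[OF finite_S' cl tau_inj[OF perm] x]
  obtain L where L: "L > 0" "(?\<tau> ^^ L) x = x" "inj_on (\<lambda>t. (?\<tau> ^^ t) x) {..<L}"
    "orb ?\<tau> x = (\<lambda>t. (?\<tau> ^^ t) x) ` {..<L}" by blast
  define X where "X t = (?\<tau> ^^ t) x" for t
  have XS: "X t \<in> S'_set k m l" for t unfolding X_def by (rule funpow_in[OF cl x])
  have XSuc: "X (Suc t) = ?\<tau> (X t)" for t by (simp add: X_def)
  have XL: "X L = X 0" using L by (simp add: X_def)
  have sumorb: "(\<Sum>y\<in>orb ?\<tau> x. \<Sum>i=1..k. f (y i)) = (\<Sum>t<L. \<Sum>i=1..k. f (X t i))"
    unfolding L(4) X_def by (subst sum.reindex[OF L(3)]) simp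
  have cardorb: "card (orb ?\<tau> x) = L" unfolding L(4) using card_image[OF L(3)] by simp
  define Q where "Q t i = Qv k m l \<nu> (X t) i" for t i
  define P where "P t i = Pv k m l \<nu> (X t) i" for t i
  define A where "A i t = (if X t i + 1 < Q t i then 0 else FF (max (P t i + 1) (l i)))" for i t
  define B where "B i t = (if X t i + 1 < Q t i then 0 else FF (X t i + 1))" for i t
  have stepX: "X (Suc t) i = max (if X t i + 1 < Q t i then X t i + 1 else P t i + 1) (l i)"
    if "1 \<le> i" "i \<le> k" for t i
    using step[OF perm XS that] unfolding XSuc Q_def P_def .
  have termeq: "FF (X (Suc t) i) - FF (X t i + 1) = A i t - B i t" if "1 \<le> i" "i \<le> k" for t i
  proof -
    have "l i \<le> X t i" using S'_low[OF XS that] .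
    then show ?thesis using stepX[OF that, of t] unfolding A_def B_def by (auto simp: max_def)
  qed
  have A1: "A 1 t = 0" for t
  proof -
    have "P t 1 = 0" unfolding P_def Pv_def[OF perm] by simp
    moreover have "max 1 (l 1) = l 1" using l1 by simp
    ultimately show ?thesis unfolding A_def using FF_l[of 1] k1 by simp
  qed
  have Bk: "B k t = 0" for t
  proof -
    have "Q t k = m + 1" by (simp add: Q_def Qv_def[OF perm])
    moreover have "X t k \<le> m" using S'_bounds[OF XS, of k] k1 by simp
    ultimately show ?thesis unfolding B_def using FF_top by (cases "X t k = m") auto
  qed
  have pair: "(\<Sum>t<L. B i t) = (\<Sum>t<L. A (Suc i) t)" if i: "1 \<le> i" "i < k" for i
  proof -
    have pl: "(if P t (Suc i) + 1 < X (Suc t) (Suc i) then 0 else FF (P t (Suc i) + 1)) = A (Suc i) t" for t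
    proof -
      have "(if P t (Suc i) + 1 < X (Suc t) (Suc i) then 0 else FF (P t (Suc i) + 1))
          = (if X t (Suc i) + 1 < Q t (Suc i) then 0 else FF (max (P t (Suc i) + 1) (l (Suc i))))"
      proof (rule pairlem)
        show "X (Suc t) (Suc i) = max (if X t (Suc i) + 1 < Q t (Suc i) then X t (Suc i) + 1 else P t (Suc i) + 1) (l (Suc i))"
          using stepX[of "Suc i" t] i by simp
        show "P t (Suc i) < X t (Suc i)" using Pv_lt(1)[OF perm XS i] unfolding P_def by simp
        show "P t (Suc i) < X (Suc t) (Suc i)" using Pv_lt(2)[OF perm XS i] unfolding P_def XSuc by simp
        show "FF (l (Suc i)) = 0" using FF_l[of "Suc i"] i by simp
      qed
      then show ?thesis unfolding A_def by simp
    qed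
    have ne: "inv \<nu> i \<noteq> inv \<nu> (Suc i)" using sig_inj[OF perm, of i "Suc i"] by auto
    show ?thesis
    proof (cases "inv \<nu> (Suc i) < inv \<nu> i")
      case True
      have "B i t = A (Suc i) t" for t
      proof -
        have p1: "P t (Suc i) = X t i" using True i by (simp add: P_def Pv_def[OF perm])
        have q1: "Q t i = X (Suc t) (Suc i)" using True i by (simp add: Q_def Qv_def[OF perm] XSuc)
        show ?thesis using pl[of t] unfolding B_def p1 q1 by simp
      qed
      then show ?thesis by simp
    next
      case False
      then have lt: "inv \<nu> i < inv \<nu> (Suc i)" using ne by simp
      have "B i (Suc t) = A (Suc i) t" for t
      proof -
        have p1: "P t (Suc i) = X (Suc t) i" using lt i by (simp add: P_def Pv_def[OF perm] XSuc)
        have q1: "Q (Suc t) i = X (Suc t) (Suc i)" using False i by (simp add: Q_def Qv_def[OF perm])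
        show ?thesis using pl[of t] unfolding B_def p1 q1 by simp
      qed
      moreover have "B i L = B i 0" unfolding B_def Q_def using XL by simp
      ultimately show ?thesis using sum_shift_periodic[of "B i" L] by simp
    qed
  qed
  have key: "(\<Sum>t<L. \<Sum>i=1..k. (f (X t i) - c)) = 0"
  proof -
    have "(\<Sum>t<L. \<Sum>i=1..k. (f (X t i) - c)) = (\<Sum>t<L. \<Sum>i=1..k. (FF (X t i) - FF (X t i + 1)))"
      using FF_step S'_bounds[OF XS] by (intro sum.cong refl) auto
    also have "\<dots> = (\<Sum>i=1..k. \<Sum>t<L. (FF (X t i) - FF (X t i + 1)))" by (rule sum.swap)
    also have "\<dots> = (\<Sum>i=1..k. (\<Sum>t<L. FF (X (Suc t) i)) - (\<Sum>t<L. FF (X t i + 1)))"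
    proof (intro sum.cong refl)
      fix i
      have "(\<Sum>t<L. FF (X (Suc t) i)) = (\<Sum>t<L. FF (X t i))"
        by (rule sum_shift_periodic) (simp add: XL)
      then show "(\<Sum>t<L. FF (X t i) - FF (X t i + 1)) = (\<Sum>t<L. FF (X (Suc t) i)) - (\<Sum>t<L. FF (X t i + 1))"
        by (simp add: sum_subtractf)
    qed
    also have "\<dots> = (\<Sum>i=1..k. (\<Sum>t<L. A i t) - (\<Sum>t<L. B i t))"
      using termeq by (intro sum.cong refl) (auto simp: sum_subtractf[symmetric] intro!: sum.cong)
    also have "\<dots> = (\<Sum>i=1..k. (\<Sum>t<L. A i t)) - (\<Sum>i=1..k. (\<Sum>t<L. B i t))"
      by (simp add: sum_subtractf)
    also have "(\<Sum>i=1..k. (\<Sum>t<L. A i t)) = (\<Sum>i=1..k. (\<Sum>t<L. B i t))"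
    proof (rule telesc[OF k1])
      show "(\<Sum>t<L. A 1 t) = 0" using A1 by simp
      show "(\<Sum>t<L. B k t) = 0" using Bk by simp
      show "\<And>i. 1 \<le> i \<Longrightarrow> i < k \<Longrightarrow> (\<Sum>t<L. B i t) = (\<Sum>t<L. A (Suc i) t)" by (rule pair)
    qed
    finally show ?thesis by simp
  qed
  have "(\<Sum>t<L. \<Sum>i=1..k. f (X t i)) = (\<Sum>t<L. (\<Sum>i=1..k. (f (X t i) - c)) + real k * c)"
    by (intro sum.cong refl) (simp add: sum_subtractf)
  also have "\<dots> = real L * (real k * c)" using key by (simp add: sum.distrib)
  finally show ?thesis using sumorb cardorb L(1) by simp
qed

end

theorem mainTheorem7:
  fixes k :: nat and m :: int and l :: "nat \<Rightarrow> int" and \<nu> :: "nat \<Rightarrow> nat"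
    and f :: "int \<Rightarrow> real"
  assumes "1 \<le> k" and "int k \<le> m"
    and "0 < l 1" and "\<And>i. 1 \<le> i \<Longrightarrow> i < k \<Longrightarrow> l i < l (i + 1)" and "l k < m + 1"
    and "\<nu> permutes {1..k}"
    and "\<exists>c. \<forall>i\<in>{1..k}. (\<Sum>v\<in>{l i..m}. f v) / real_of_int (m - l i + 1) = c"
  shows "homomesic (S'_set k m l) (lwinch_nu k m l \<nu>) (\<lambda>x. \<Sum>i=1..k. f (x i))"
proof -
  obtain c where c: "\<forall>i\<in>{1..k}. (\<Sum>v\<in>{l i..m}. f v) / real_of_int (m - l i + 1) = c"
    using assms(7) by blast
  show ?thesis unfolding homomesic_def
    using main[OF assms(1-6) c] by blast
qed



end
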